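(* Under assumption (R), the function $\ell^{\mathrm{tr}}:[0,1]\times\mathbb R^d\times\mathbb S^d_+\to[0,+\infty]$ is nonnegative, is convex in $\Sigma_1\in\mathbb S^d_+$ for each fixed $(t,x)$, and is lower semicontinuous jointly in $(t,x,\Sigma_1)$.
   Context: Continuous reference data $\lambda_2:[0,1]\times\mathbb R^d\to(0,\infty)$, $\bar\Sigma_2:[0,1]\times\mathbb R^d\to\mathbb S^d_{++}$. Assumption (R): there are $0<\underline b\le\overline b<\infty$, $M>0$ with $\underline b\le\lambda_2\le\overline b$ and $\bar\Sigma_2\preceq MI_d$ everywhere. For $\Sigma_1\in\mathbb S^d_+$ let $\lambda_1:=\frac1d\mathrm{tr}(\bar\Sigma_2(t,x)^{-1}\Sigma_1)$ and, if $\Sigma_1\ne0$, $\bar\Sigma_1:=\Sigma_1/\lambda_1$. Define $\ell^{\mathrm{tr}}(t,x,\Sigma_1)=\lambda_1\log\frac{\lambda_1}{\lambda_2(t,x)}-\lambda_1+\lambda_2(t,x)-\frac{\lambda_1}2\log\det(\bar\Sigma_2(t,x)^{-1}\bar\Sigma_1)$ if $\Sigma_1\in\mathbb S^d_{++}$; $=\lambda_2(t,x)$ if $\Sigma_1=0$; $=+\infty$ if $\Sigma_1$ is singular and nonzero. *)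

theory Defs
  imports "HOL-Analysis.Analysis" "HOL-Library.Extended_Real"
begin

definition psd :: "real^'n^'n \<Rightarrow> bool" where
  "psd A \<longleftrightarrow> transpose A = A \<and> (\<forall>v. 0 \<le> v \<bullet> (A *v v))"

definition pd :: "real^'n^'n \<Rightarrow> bool" where
  "pd A \<longleftrightarrow> transpose A = A \<and> (\<forall>v. v \<noteq> 0 \<longrightarrow> 0 < v \<bullet> (A *v v))"

definition loewner_le :: "real^'n^'n \<Rightarrow> real^'n^'n \<Rightarrow> bool" where
  "loewner_le A B \<longleftrightarrow> (\<forall>v. v \<bullet> (A *v v) \<le> v \<bullet> (B *v v))"

definition ltr :: "(real \<Rightarrow> real^'n \<Rightarrow> real) \<Rightarrow> (real \<Rightarrow> real^'n \<Rightarrow> real^'n^'n)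
                   \<Rightarrow> real \<Rightarrow> real^'n \<Rightarrow> real^'n^'n \<Rightarrow> ereal" where
  "ltr lam2 Sig2 t x S1 =
     (if S1 = 0 then ereal (lam2 t x)
      else if pd S1 then
        (let l1 = trace (matrix_inv (Sig2 t x) ** S1) / real CARD('n);
             Sb1 = (1 / l1) *\<^sub>R S1
         in ereal (l1 * ln (l1 / lam2 t x) - l1 + lam2 t x
                   - l1 / 2 * ln (det (matrix_inv (Sig2 t x) ** Sb1))))
      else \<infinity>)"

definition ereal_convex_on :: "'a::real_vector set \<Rightarrow> ('a \<Rightarrow> ereal) \<Rightarrow> bool" where
  "ereal_convex_on C f \<longleftrightarrow> (\<forall>a\<in>C. \<forall>b\<in>C. \<forall>\<mu>::real. 0 \<le> \<mu> \<and> \<mu> \<le> 1 \<longrightarrow>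
      f (\<mu> *\<^sub>R a + (1 - \<mu>) *\<^sub>R b) \<le> ereal \<mu> * f a + ereal (1 - \<mu>) * f b)"

definition lsc_on :: "'a::topological_space set \<Rightarrow> ('a \<Rightarrow> ereal) \<Rightarrow> bool" where
  "lsc_on D f \<longleftrightarrow> (\<forall>p\<in>D. \<forall>c. c < f p \<longrightarrow> (\<forall>\<^sub>F q in at p within D. c < f q))"

end

theory Submission
  imports Defs
begin

lemma sym_dot:
  fixes A :: "real^'n^'n"
  assumes "transpose A = A"
  shows "x \<bullet> (A *v y) = (A *v x) \<bullet> y"
  by (metis assms dot_lmul_matrix inner_commute transpose_matrix_vector)

lemma max_eigen:
  fixes A :: "real^'n^'n"
  assumes sym: "transpose A = A" and V: "subspace V" and inv: "\<And>x. x \<in> V \<Longrightarrow> A *v x \<in> V"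
    and u: "u \<in> V" "norm u = 1"
    and mx: "\<And>y. y \<in> V \<Longrightarrow> norm y = 1 \<Longrightarrow> y \<bullet> (A *v y) \<le> u \<bullet> (A *v u)"
  shows "A *v u = (u \<bullet> (A *v u)) *\<^sub>R u"
proof -
  define m where "m = u \<bullet> (A *v u)"
  have mx2: "y \<bullet> (A *v y) \<le> m * (norm y)^2" if "y \<in> V" for y
  proof (cases "y = 0")
    case True then show ?thesis by simp
  next
    case False
    have "(y /\<^sub>R norm y) \<bullet> (A *v (y /\<^sub>R norm y)) \<le> m"
      using mx[of "y /\<^sub>R norm y"] that False V unfolding m_def
      by (simp add: subspace_scale)
    moreover have "(y /\<^sub>R norm y) \<bullet> (A *v (y /\<^sub>R norm y)) = (y \<bullet> (A *v y)) / (norm y)^2"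
      by (simp add: matrix_vector_mult_scaleR power2_eq_square field_simps)
    ultimately have "(y \<bullet> (A *v y)) / (norm y)^2 \<le> m" by simp
    then show ?thesis using False by (simp add: divide_le_eq mult.commute)
  qed
  define w where "w = A *v u - m *\<^sub>R u"
  have wV: "w \<in> V" unfolding w_def using V inv u by (simp add: subspace_diff subspace_scale)
  have uu: "u \<bullet> u = 1" using u by (simp add: norm_eq_1)
  have s1: "u \<bullet> (A *v x) = x \<bullet> (A *v u)" for x
    using sym_dot[OF sym, of u x] by (simp add: inner_commute)
  have wu: "w \<bullet> u = 0"
  proof -
    have "w \<bullet> u = (A *v u) \<bullet> u - m * (u \<bullet> u)" unfolding w_def by (simp add: inner_diff_left)
    also have "\<dots> = 0" unfolding m_def uu by (simp add: inner_commute)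
    finally show ?thesis .
  qed
  have wAu: "w \<bullet> (A *v u) = w \<bullet> w"
  proof -
    have "w \<bullet> w = w \<bullet> (A *v u) - m * (w \<bullet> u)" unfolding w_def by (simp add: inner_diff_right)
    then show ?thesis using wu by simp
  qed
  define K where "K = m * (w \<bullet> w) - w \<bullet> (A *v w)"
  have key: "2 * t * (w \<bullet> w) \<le> t^2 * K" for t
  proof -
    have yV: "u + t *\<^sub>R w \<in> V" using V u wV by (simp add: subspace_add subspace_scale)
    have "(u + t *\<^sub>R w) \<bullet> (A *v (u + t *\<^sub>R w)) = u \<bullet> (A *v u) + t * (u \<bullet> (A *v w)) + t * (w \<bullet> (A *v u)) + t^2 * (w \<bullet> (A *v w))"
      by (simp add: matrix_vector_right_distrib matrix_vector_mult_scaleR inner_add_left inner_add_right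
          power2_eq_square algebra_simps)
    also have "\<dots> = m + 2 * t * (w \<bullet> (A *v u)) + t^2 * (w \<bullet> (A *v w))"
      unfolding m_def s1[of w] by simp
    finally have e1: "(u + t *\<^sub>R w) \<bullet> (A *v (u + t *\<^sub>R w)) = m + 2 * t * (w \<bullet> (A *v u)) + t^2 * (w \<bullet> (A *v w))" .
    have "(norm (u + t *\<^sub>R w))^2 = 1 + t^2 * (w \<bullet> w)"
      unfolding power2_norm_eq_inner using uu wu
      by (simp add: inner_add_left inner_add_right inner_commute power2_eq_square algebra_simps)
    with e1 show ?thesis using mx2[OF yV] wAu unfolding K_def by (simp add: algebra_simps)
  qed
  have "w \<bullet> w = 0"
  proof (rule ccontr)
    assume ne: "w \<bullet> w \<noteq> 0"
    then have pos: "w \<bullet> w > 0" by (simp add: order_le_neq_trans)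
    define t where "t = (w \<bullet> w) / (\<bar>K\<bar> + 1)"
    have tpos: "t > 0" unfolding t_def using pos by simp
    have "2 * t * (w \<bullet> w) \<le> t * (t * K)" using key[of t] by (simp add: power2_eq_square mult.assoc)
    then have "2 * (w \<bullet> w) \<le> t * K" using tpos by simp
    also have "\<dots> \<le> t * \<bar>K\<bar>" using tpos by (simp add: mult_left_mono)
    also have "\<dots> < w \<bullet> w" unfolding t_def using pos
      by (simp add: divide_less_eq field_simps)
    finally show False using pos by simp
  qed
  then have "w = 0" by simp
  then show ?thesis unfolding w_def m_def by simp
qed

lemma eigenbasis_subspace:
  fixes A :: "real^'n^'n"
  assumes sym: "transpose A = A"
  shows "subspace V \<Longrightarrow> (\<And>x. x \<in> V \<Longrightarrow> A *v x \<in> V) \<Longrightarrow>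
     \<exists>U. U \<subseteq> V \<and> pairwise orthogonal U \<and> (\<forall>u\<in>U. norm u = 1) \<and>
         (\<forall>u\<in>U. \<exists>c. A *v u = c *\<^sub>R u) \<and> span U = V"
proof (induction "dim V" arbitrary: V rule: less_induct)
  case less
  show ?case
  proof (cases "V = {0}")
    case True
    then show ?thesis by (intro exI[of _ "{}"]) auto
  next
    case False
    then obtain v where v: "v \<in> V" "v \<noteq> 0" using less.prems(1) subspace_0 by blast
    define K where "K = V \<inter> sphere 0 1"
    have cK: "compact K" unfolding K_def
      using closed_subspace[OF less.prems(1)] by (simp add: compact_Int_closed closed_Int_compact)
    have "v /\<^sub>R norm v \<in> K" unfolding K_def using v less.prems(1) by (simp add: subspace_scale)
    then have neK: "K \<noteq> {}" by blast
    have "continuous_on K (\<lambda>y. y \<bullet> (A *v y))"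
      by (intro continuous_intros)
    from continuous_attains_sup[OF cK neK this] obtain u where
      uK: "u \<in> K" and umax: "\<And>y. y \<in> K \<Longrightarrow> y \<bullet> (A *v y) \<le> u \<bullet> (A *v u)" by blast
    have uV: "u \<in> V" and un: "norm u = 1" using uK unfolding K_def by auto
    define m where "m = u \<bullet> (A *v u)"
    have Au: "A *v u = m *\<^sub>R u" unfolding m_def
      by (rule max_eigen[OF sym less.prems(1) less.prems(2) uV un]) (use umax K_def in auto)
    define W where "W = V \<inter> {x. u \<bullet> x = 0}"
    have sW: "subspace W" unfolding W_def using less.prems(1) subspace_hyperplane subspace_inter by blast
    have iW: "A *v x \<in> W" if "x \<in> W" for x
    proof -
      have "u \<bullet> (A *v x) = (A *v u) \<bullet> x" by (rule sym_dot[OF sym])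
      also have "\<dots> = 0" using that unfolding W_def Au by simp
      finally show ?thesis using that less.prems(2) unfolding W_def by auto
    qed
    have uu: "u \<bullet> u = 1" using un by (simp add: norm_eq_1)
    have "W \<subset> V" using uV uu unfolding W_def by (metis (mono_tags, lifting) Int_iff Int_lower1 mem_Collect_eq psubsetI zero_neq_one)
    then have "span W \<subset> span V" using sW less.prems(1) by (simp add: span_eq_iff[THEN iffD2])
    then have "dim W < dim V" by (rule dim_psubset)
    from less.hyps[OF this sW iW] obtain U where U: "U \<subseteq> W" "pairwise orthogonal U" "\<forall>u\<in>U. norm u = 1"
      "\<forall>u\<in>U. \<exists>c. A *v u = c *\<^sub>R u" "span U = W" by blast
    show ?thesis
    proof (intro exI[of _ "insert u U"] conjI)
      show "insert u U \<subseteq> V" using U(1) uV unfolding W_def by auto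
      show "pairwise orthogonal (insert u U)"
        using U(1,2) unfolding W_def pairwise_insert by (auto simp: orthogonal_def inner_commute)
      show "\<forall>u\<in>insert u U. norm u = 1" using U(3) un by auto
      show "\<forall>v\<in>insert u U. \<exists>c. A *v v = c *\<^sub>R v" using U(4) Au by auto
      show "span (insert u U) = V"
      proof
        show "span (insert u U) \<subseteq> V"
          using U(1) uV less.prems(1) unfolding W_def by (intro span_minimal) auto
        show "V \<subseteq> span (insert u U)"
        proof
          fix x assume x: "x \<in> V"
          have "x - (u \<bullet> x) *\<^sub>R u \<in> W"
            unfolding W_def using x uV less.prems(1) uu
            by (auto simp: subspace_diff subspace_scale inner_diff_right)
          then show "x \<in> span (insert u U)" using U(5) span_breakdown_eq by (metis scaleR_conv_of_real)
        qed
      qed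
    qed
  qed
qed

definition diagm :: "real^'n \<Rightarrow> real^'n^'n" where
  "diagm d = (\<chi> i j. if i = j then d$i else 0)"

lemma matrix_diagm_col: "((Q::real^'n^'n) ** diagm d) $ i $ j = Q $ i $ j * d $ j"
  unfolding diagm_def matrix_matrix_mult_def
  by (simp add: if_distrib[of "\<lambda>x. _ * x"] sum.delta' cong: if_cong)

lemma spectral:
  fixes A :: "real^'n^'n"
  assumes sym: "transpose A = A"
  shows "\<exists>Q d. orthogonal_matrix Q \<and> A = Q ** diagm d ** transpose Q"
proof -
  obtain U where U: "pairwise orthogonal U" "\<forall>u\<in>U. norm u = 1"
      "\<forall>u\<in>U. \<exists>c. A *v u = c *\<^sub>R u" "span U = UNIV"
    using eigenbasis_subspace[OF sym, of UNIV] by auto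
  have "0 \<notin> U" using U(2) by force
  then have ind: "independent U" using U(1) pairwise_orthogonal_independent by blast
  then have fin: "finite U" using independent_imp_finite by blast
  have "card U = dim U" using dim_eq_card_independent[OF ind] by simp
  also have "\<dots> = dim (span U)" by simp
  also have "\<dots> = CARD('n)" using U(4) by simp
  finally have cU: "card (UNIV::'n set) = card U" by simp
  obtain f where f: "bij_betw f (UNIV::'n set) U" using finite_same_card_bij[OF finite fin cU] by blast
  from U(3) obtain c where c: "\<And>u. u \<in> U \<Longrightarrow> A *v u = c u *\<^sub>R u" by metis
  define Q :: "real^'n^'n" where "Q = (\<chi> i j. f j $ i)"
  define d :: "real^'n" where "d = (\<chi> j. c (f j))"
  have colQ: "column j Q = f j" for j unfolding Q_def column_def by (simp add: vec_eq_iff)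
  have fU: "f j \<in> U" for j using f by (auto simp: bij_betw_def)
  have oQ: "orthogonal_matrix Q"
    unfolding orthogonal_matrix_orthonormal_columns colQ
  proof (intro conjI allI impI)
    show "norm (f i) = 1" for i using fU U(2) by auto
    show "orthogonal (f i) (f j)" if "i \<noteq> j" for i j
    proof -
      have "f i \<noteq> f j" using f that by (auto simp: bij_betw_def inj_on_def)
      then show ?thesis using U(1) fU unfolding pairwise_def by blast
    qed
  qed
  have AQ: "A ** Q = Q ** diagm d"
  proof -
    have "(A ** Q) $ i $ j = (A *v f j) $ i" for i j
      unfolding Q_def matrix_matrix_mult_def matrix_vector_mult_def by simp
    then show ?thesis using c[OF fU] by (simp add: vec_eq_iff matrix_diagm_col Q_def d_def mult.commute)
  qed
  have "A = A ** (Q ** transpose Q)" using oQ by (simp add: orthogonal_matrix_def)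
  also have "\<dots> = Q ** diagm d ** transpose Q" by (simp add: matrix_mul_assoc AQ)
  finally show ?thesis using oQ by blast
qed

lemma det_diagm: "det (diagm d) = (\<Prod>i\<in>UNIV. d $ i)"
  by (subst det_diagonal) (auto simp: diagm_def)

lemma trace_diagm: "trace (diagm d) = (\<Sum>i\<in>UNIV. d $ i)"
  by (simp add: trace_def diagm_def)

lemma transpose_diagm[simp]: "transpose (diagm d) = diagm d"
  by (simp add: transpose_def diagm_def vec_eq_iff)

lemma diagm_mult: "diagm a ** diagm b = diagm (\<chi> i. a$i * b$i)"
  by (simp add: vec_eq_iff matrix_diagm_col) (simp add: diagm_def)

lemma orth_det_sq: "orthogonal_matrix (Q::real^'n^'n) \<Longrightarrow> det Q * det Q = 1"
  using det_orthogonal_matrix by fastforce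

lemma orth_conj_det:
  assumes "orthogonal_matrix (Q::real^'n^'n)"
  shows "det (Q ** D ** transpose Q) = det D"
  using orth_det_sq[OF assms] by (simp add: det_mul)

lemma orth_conj_trace:
  assumes "orthogonal_matrix (Q::real^'n^'n)"
  shows "trace (Q ** D ** transpose Q) = trace D"
proof -
  have "trace (Q ** D ** transpose Q) = trace (transpose Q ** (Q ** D))" by (rule trace_mul_sym)
  also have "\<dots> = trace D" using assms by (simp add: matrix_mul_assoc orthogonal_matrix_def)
  finally show ?thesis .
qed

lemma spectral_eig:
  assumes o: "orthogonal_matrix (Q::real^'n^'n)" and A: "A = Q ** diagm d ** transpose Q"
  shows "A *v column j Q = d$j *\<^sub>R column j Q"
proof -
  have "A ** Q = Q ** diagm d" using o unfolding A
    by (simp add: orthogonal_matrix_def matrix_mul_assoc[symmetric])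
  then have "(A ** Q) $ i $ j = Q $ i $ j * d $ j" for i by (simp add: matrix_diagm_col)
  then show ?thesis
    by (simp add: vec_eq_iff column_def matrix_matrix_mult_def matrix_vector_mult_def mult.commute)
qed

lemma orth_col_norm: "orthogonal_matrix (Q::real^'n^'n) \<Longrightarrow> norm (column j Q) = 1"
  by (simp add: orthogonal_matrix_orthonormal_columns)

lemma eig_val:
  assumes o: "orthogonal_matrix (Q::real^'n^'n)" and A: "A = Q ** diagm d ** transpose Q"
  shows "column j Q \<bullet> (A *v column j Q) = d $ j"
  using spectral_eig[OF o A, of j] orth_col_norm[OF o, of j] by (simp add: norm_eq_1)

lemma psd_spectral:
  assumes "psd A"
  shows "\<exists>Q d. orthogonal_matrix Q \<and> A = Q ** diagm d ** transpose Q \<and> (\<forall>j. d$j \<ge> 0)"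
proof -
  obtain Q d where Qd: "orthogonal_matrix Q" "A = Q ** diagm d ** transpose Q"
    using spectral assms unfolding psd_def by blast
  moreover have "d $ j \<ge> 0" for j using eig_val[OF Qd, of j] assms unfolding psd_def by metis
  ultimately show ?thesis by blast
qed

lemma pd_spectral:
  assumes "pd A"
  shows "\<exists>Q d. orthogonal_matrix Q \<and> A = Q ** diagm d ** transpose Q \<and> (\<forall>j. d$j > 0)"
proof -
  obtain Q d where Qd: "orthogonal_matrix Q" "A = Q ** diagm d ** transpose Q"
    using spectral assms unfolding pd_def by blast
  moreover have "d $ j > 0" for j
  proof -
    have "column j Q \<noteq> 0" using orth_col_norm[OF Qd(1), of j] by auto
    then show ?thesis using eig_val[OF Qd, of j] assms unfolding pd_def by metis
  qed
  ultimately show ?thesis by blast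
qed

lemma pd_psd: "pd A \<Longrightarrow> psd A"
  unfolding pd_def psd_def by (metis inner_zero_left matrix_vector_mult_0_right order_le_less)

lemma pd_det_pos: "pd A \<Longrightarrow> det A > 0"
proof -
  assume "pd A"
  then obtain Q d where Qd: "orthogonal_matrix Q" "A = Q ** diagm d ** transpose Q" "\<forall>j. d$j > 0"
    using pd_spectral by blast
  then show "det A > 0" by (simp add: orth_conj_det det_diagm prod_pos)
qed

lemma pd_invertible: "pd A \<Longrightarrow> invertible A"
  using pd_det_pos invertible_det_nz by force

lemma inv_props:
  assumes "invertible (A::real^'n^'n)"
  shows "A ** matrix_inv A = mat 1" "matrix_inv A ** A = mat 1"
  using someI_ex[OF assms[unfolded invertible_def]] unfolding matrix_inv_def by auto

lemma inv_unique:
  assumes "(A::real^'n^'n) ** B = mat 1"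
  shows "matrix_inv A = B"
proof -
  have inv: "invertible A" using assms invertible_right_inverse by blast
  have "matrix_inv A = matrix_inv A ** (A ** B)" using assms by simp
  also have "\<dots> = B" using inv_props[OF inv] by (simp add: matrix_mul_assoc)
  finally show ?thesis .
qed

lemma pd_inv: assumes "pd A" shows "pd (matrix_inv A)"
proof -
  have inv: "invertible A" using pd_invertible assms by blast
  note ip = inv_props[OF inv]
  have sA: "transpose A = A" using assms unfolding pd_def by blast
  have "transpose (matrix_inv A) = matrix_inv A"
  proof -
    have "A ** transpose (matrix_inv A) = mat 1"
      using arg_cong[OF ip(2), of transpose] sA by (simp add: matrix_transpose_mul)
    then show ?thesis using inv_unique ip(1) by metis
  qed
  moreover have "0 < v \<bullet> (matrix_inv A *v v)" if "v \<noteq> 0" for v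
  proof -
    define w where "w = matrix_inv A *v v"
    have v: "v = A *v w" unfolding w_def by (simp add: matrix_vector_mul_assoc ip)
    then have "w \<noteq> 0" using that by auto
    then have "0 < w \<bullet> (A *v w)" using assms unfolding pd_def by blast
    also have "\<dots> = v \<bullet> (matrix_inv A *v v)" unfolding w_def using v[symmetric] w_def
      by (simp add: inner_commute)
    finally show ?thesis .
  qed
  ultimately show ?thesis unfolding pd_def by blast
qed

lemma scaleR_mv: "((c::real) *\<^sub>R (A::real^'n^'m)) *v v = c *\<^sub>R (A *v v)"
  by (simp add: vec_eq_iff matrix_vector_mult_def sum_distrib_left mult.assoc)

lemma pd_scale: "pd A \<Longrightarrow> c > 0 \<Longrightarrow> pd (c *\<^sub>R A)"
  unfolding pd_def by (simp add: transpose_scalar scaleR_mv)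

lemma mv_add: "((A::real^'n^'m) + B) *v v = A *v v + B *v v"
  by (simp add: vec_eq_iff matrix_vector_mult_def sum.distrib algebra_simps)

lemma transpose_add': "transpose ((A::real^'n^'n) + B) = transpose A + transpose B"
  by (simp add: vec_eq_iff transpose_def)

lemma quad_comb: "v \<bullet> ((a *\<^sub>R A + b *\<^sub>R B) *v v) = a * (v \<bullet> (A *v v)) + b * (v \<bullet> (B *v v))"
  for A B :: "real^'n^'n"
  by (simp add: mv_add scaleR_mv inner_add_right)

lemma psd_comb:
  assumes "psd A" "psd B" "0 \<le> \<mu>" "\<mu> \<le> 1"
  shows "psd (\<mu> *\<^sub>R A + (1 - \<mu>) *\<^sub>R B)"
  using assms unfolding psd_def
  by (simp add: transpose_add' transpose_scalar quad_comb)

lemma pd_comb: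
  assumes "pd A" "psd B" "0 < \<mu>" "\<mu> \<le> 1"
  shows "pd (\<mu> *\<^sub>R A + (1 - \<mu>) *\<^sub>R B)"
  using assms unfolding psd_def pd_def
  by (auto simp: transpose_add' transpose_scalar quad_comb intro!: add_pos_nonneg)

lemma pd_factor:
  fixes S :: "real^'n^'n"
  assumes "pd S"
  shows "\<exists>R::real^'n^'n. invertible R \<and> S = R ** transpose R"
proof -
  obtain Q d where Qd: "orthogonal_matrix Q" "S = Q ** diagm d ** transpose Q" "\<forall>j. d$j > 0"
    using pd_spectral assms by blast
  define s :: "real^'n" where "s = (\<chi> i. sqrt (d $ i))"
  define R where "R = Q ** diagm s"
  have "R ** transpose R = Q ** (diagm s ** diagm s) ** transpose Q"
    unfolding R_def by (simp add: matrix_transpose_mul matrix_mul_assoc)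
  also have "diagm s ** diagm s = diagm d"
    unfolding diagm_mult s_def using Qd(3) by (simp add: vec_eq_iff order_less_imp_le)
  finally have "S = R ** transpose R" using Qd(2) by simp
  moreover have "det R \<noteq> 0"
  proof -
    have p: "(\<Prod>i\<in>UNIV. s$i) > 0" unfolding s_def using Qd(3) by (simp add: prod_pos)
    have "det R = det Q * (\<Prod>i\<in>UNIV. s$i)" unfolding R_def by (simp add: det_mul det_diagm)
    then show ?thesis using p orth_det_sq[OF Qd(1)] by (smt (verit) mult_eq_0_iff)
  qed
  ultimately show ?thesis using invertible_det_nz by blast
qed

lemma pd_congr:
  assumes "pd B" "invertible R"
  shows "pd (transpose R ** B ** R)"
proof -
  have sB: "transpose B = B" using assms unfolding pd_def by blast
  have "transpose (transpose R ** B ** R) = transpose R ** B ** R"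
    by (simp add: matrix_transpose_mul sB matrix_mul_assoc)
  moreover have "0 < v \<bullet> ((transpose R ** B ** R) *v v)" if "v \<noteq> 0" for v
  proof -
    have "R *v v \<noteq> 0" using inj_matrix_vector_mult[OF assms(2)] that
      by (metis injD matrix_vector_mult_0_right)
    then have "0 < (R *v v) \<bullet> (B *v (R *v v))" using assms unfolding pd_def by blast
    also have "\<dots> = v \<bullet> (transpose R *v (B *v (R *v v)))"
      by (metis dot_lmul_matrix vector_transpose_matrix)
    also have "\<dots> = v \<bullet> ((transpose R ** B ** R) *v v)"
      by (metis matrix_vector_mul_assoc)
    finally show ?thesis .
  qed
  ultimately show ?thesis unfolding pd_def by blast
qed

lemma amgm_diag:
  fixes d :: "real^'n"
  assumes pos: "\<And>i. d$i > 0"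
  shows "(\<Prod>i\<in>UNIV. d$i) \<le> ((\<Sum>i\<in>UNIV. d$i) / real CARD('n))^CARD('n)"
proof -
  define n where "n = real CARD('n)"
  have n0: "n > 0" unfolding n_def by simp
  define m where "m = (\<Sum>i\<in>UNIV. d$i) / n"
  have m0: "m > 0" unfolding m_def using pos n0 by (simp add: sum_pos)
  have "(\<Prod>i\<in>UNIV. d$i) = (\<Prod>i\<in>UNIV. m * (d$i / m))" using m0 by simp
  also have "\<dots> = (\<Prod>i\<in>(UNIV::'n set). m) * (\<Prod>i\<in>UNIV. d$i / m)" by (simp only: prod.distrib)
  also have "\<dots> = m ^ CARD('n) * (\<Prod>i\<in>UNIV. d$i / m)" by simp
  also have "(\<Prod>i\<in>UNIV. d$i / m) \<le> (\<Prod>i\<in>UNIV. exp (d$i / m - 1))"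
  proof (rule prod_mono)
    fix i show "0 \<le> d$i / m \<and> d$i / m \<le> exp (d$i / m - 1)"
      using pos[of i] m0 exp_ge_add_one_self[of "d$i/m - 1"] by simp
  qed
  also have "\<dots> = exp (\<Sum>i\<in>UNIV. d$i / m - 1)" by (simp add: exp_sum)
  also have "(\<Sum>i\<in>UNIV. d$i / m - 1) = 0"
  proof -
    have "(\<Sum>i\<in>UNIV. d$i / m - 1) = (\<Sum>i\<in>UNIV. d$i) / m - n"
      by (simp add: sum_subtractf sum_divide_distrib[symmetric] n_def)
    also have "(\<Sum>i\<in>UNIV. d$i) / m = n" using m0 n0 unfolding m_def by (simp add: field_simps)
    finally show ?thesis by simp
  qed
  finally show ?thesis using m0 unfolding m_def n_def
    by (simp add: mult_left_mono)
qed

lemma pd_amgm: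
  fixes C :: "real^'n^'n"
  assumes "pd C"
  shows "0 < trace C \<and> 0 < det C \<and> det C \<le> (trace C / real CARD('n))^CARD('n)"
proof -
  obtain Q d where Qd: "orthogonal_matrix Q" "C = Q ** diagm d ** transpose Q" "\<forall>j. d$j > 0"
    using pd_spectral assms by blast
  have t: "trace C = (\<Sum>i\<in>UNIV. d$i)" using Qd by (simp add: orth_conj_trace trace_diagm)
  have dt: "det C = (\<Prod>i\<in>UNIV. d$i)" using Qd by (simp add: orth_conj_det det_diagm)
  show ?thesis unfolding t dt using Qd(3) amgm_diag[of d]
    by (auto intro: sum_pos prod_pos)
qed

lemma pd_prod_amgm:
  fixes B S :: "real^'n^'n"
  assumes "pd B" "pd S"
  shows "0 < trace (B ** S) \<and> 0 < det (B ** S) \<and> det (B ** S) \<le> (trace (B ** S) / real CARD('n))^CARD('n)"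
proof -
  obtain R :: "real^'n^'n" where R: "invertible R" "S = R ** transpose R" using pd_factor assms(2) by blast
  have tr: "trace (B ** S) = trace (transpose R ** B ** R)"
  proof -
    have "trace (B ** S) = trace ((B ** R) ** transpose R)" using R(2) by (simp add: matrix_mul_assoc)
    also have "\<dots> = trace (transpose R ** (B ** R))" by (rule trace_mul_sym)
    finally show ?thesis by (simp add: matrix_mul_assoc)
  qed
  have dt: "det (B ** S) = det (transpose R ** B ** R)" using R(2) by (simp add: det_mul)
  show ?thesis unfolding tr dt by (rule pd_amgm[OF pd_congr[OF assms(1) R(1)]])
qed

lemma transpose_mult_entry:
  "(transpose (A::real^'n^'n) ** N) $ i $ j = column i A \<bullet> column j N"
  by (simp add: matrix_matrix_mult_def transpose_def column_def inner_vec_def mult.commute)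

lemma column_mult: "column j ((M::real^'n^'n) ** Q) = M *v column j Q"
  by (simp add: vec_eq_iff matrix_matrix_mult_def matrix_vector_mult_def column_def)

lemma trace_pos_psd:
  fixes B S :: "real^'n^'n"
  assumes "pd B" "psd S" "S \<noteq> 0"
  shows "0 < trace (B ** S)"
proof -
  obtain Q d where Qd: "orthogonal_matrix Q" "S = Q ** diagm d ** transpose Q" "\<forall>j. d$j \<ge> 0"
    using psd_spectral assms(2) by blast
  define M where "M = transpose Q ** B ** Q"
  have "trace (B ** S) = trace ((B ** Q ** diagm d) ** transpose Q)"
    using Qd(2) by (simp add: matrix_mul_assoc)
  also have "\<dots> = trace (transpose Q ** (B ** Q ** diagm d))" by (rule trace_mul_sym)
  also have "\<dots> = trace (M ** diagm d)" unfolding M_def by (simp add: matrix_mul_assoc)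
  also have "\<dots> = (\<Sum>i\<in>UNIV. M$i$i * d$i)" by (simp add: trace_def matrix_diagm_col)
  finally have tr: "trace (B ** S) = (\<Sum>i\<in>UNIV. M$i$i * d$i)" .
  have Mii: "M$i$i > 0" for i
  proof -
    have "M$i$i = column i Q \<bullet> (B *v column i Q)"
      unfolding M_def by (simp add: matrix_mul_assoc[symmetric] transpose_mult_entry column_mult)
    moreover have "column i Q \<noteq> 0" using orth_col_norm[OF Qd(1), of i] by auto
    ultimately show ?thesis using assms(1) unfolding pd_def by auto
  qed
  obtain k where k: "d$k \<noteq> 0"
  proof (rule ccontr)
    assume "\<not> thesis"
    then have "\<forall>k. d$k = 0" using that by blast
    then have "diagm d = 0" by (simp add: diagm_def vec_eq_iff)
    then have "S = 0" using Qd(2) by (simp add: vec_eq_iff matrix_matrix_mult_def)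
    then show False using assms(3) by simp
  qed
  have "0 < (\<Sum>i\<in>UNIV. M$i$i * d$i)"
  proof (rule sum_pos2[of UNIV k])
    show "0 < M$k$k * d$k" using Mii[of k] Qd(3) k by (simp add: order_le_neq_trans)
    show "0 \<le> M$i$i * d$i" for i using Mii[of i] Qd(3) by simp
  qed auto
  then show ?thesis using tr by simp
qed

lemma madd_rdistrib: "((A::real^'n^'n) + B) ** C = A ** C + B ** C"
  by (simp add: vec_eq_iff matrix_matrix_mult_def sum.distrib algebra_simps)

lemma conj_lin:
  fixes A M N C :: "real^'n^'n"
  shows "A ** (a *\<^sub>R M + b *\<^sub>R N) ** C = a *\<^sub>R (A ** M ** C) + b *\<^sub>R (A ** N ** C)"
  by (simp add: matrix_add_ldistrib madd_rdistrib matrix_scalar_ac scalar_matrix_assoc[symmetric])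

lemma logdet_concave:
  fixes X Y :: "real^'n^'n"
  assumes X: "pd X" and Y: "pd Y" and th: "0 \<le> \<theta>" "\<theta> \<le> 1"
  shows "\<theta> * ln (det X) + (1 - \<theta>) * ln (det Y) \<le> ln (det (\<theta> *\<^sub>R X + (1 - \<theta>) *\<^sub>R Y))"
proof -
  obtain R :: "real^'n^'n" where R: "invertible R" "X = R ** transpose R" using pd_factor X by blast
  define Ri where "Ri = matrix_inv R"
  note RR = inv_props[OF R(1), folded Ri_def]
  have iRi: "invertible Ri" using RR invertible_def by blast
  have iRiT: "invertible (transpose Ri)" using iRi by (simp add: transpose_invertible)
  define Z where "Z = Ri ** Y ** transpose Ri"
  have pZ: "pd Z" unfolding Z_def using pd_congr[OF Y iRiT] by simp
  have YZ: "Y = R ** Z ** transpose R"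
  proof -
    have "R ** Z ** transpose R = (R ** Ri) ** Y ** (transpose Ri ** transpose R)"
      unfolding Z_def by (simp add: matrix_mul_assoc)
    also have "transpose Ri ** transpose R = mat 1"
      using RR(1) by (metis matrix_transpose_mul transpose_mat)
    finally show ?thesis using RR by simp
  qed
  obtain P e where Pe: "orthogonal_matrix P" "Z = P ** diagm e ** transpose P" "\<forall>j. e$j > 0"
    using pd_spectral pZ by blast
  define f :: "real^'n" where "f = (\<chi> i. \<theta> + (1 - \<theta>) * e$i)"
  have I: "mat 1 = P ** diagm (\<chi> i. 1) ** transpose P"
  proof -
    have "diagm (\<chi> i. 1) = (mat 1 :: real^'n^'n)" by (simp add: diagm_def mat_def vec_eq_iff)
    then show ?thesis using Pe(1) by (simp add: orthogonal_matrix_def)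
  qed
  have fe: "\<theta> *\<^sub>R diagm (\<chi> i. 1) + (1 - \<theta>) *\<^sub>R diagm e = diagm f"
    by (simp add: diagm_def f_def vec_eq_iff)
  have comb: "\<theta> *\<^sub>R X + (1 - \<theta>) *\<^sub>R Y = R ** (P ** diagm f ** transpose P) ** transpose R"
  proof -
    have "\<theta> *\<^sub>R X + (1 - \<theta>) *\<^sub>R Y = R ** (\<theta> *\<^sub>R mat 1 + (1 - \<theta>) *\<^sub>R Z) ** transpose R"
      unfolding conj_lin R(2) YZ by simp
    also have "\<theta> *\<^sub>R mat 1 + (1 - \<theta>) *\<^sub>R Z = P ** diagm f ** transpose P"
      unfolding I Pe(2) conj_lin[symmetric] fe ..
    finally show ?thesis .
  qed
  define r where "r = det R * det R"
  have r0: "r > 0" unfolding r_def using R(1) invertible_det_nz[of R] by (auto simp: zero_less_mult_iff linorder_neq_iff)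
  have dX: "det X = r" unfolding R(2) r_def by (simp add: det_mul)
  have dY: "det Y = r * (\<Prod>i\<in>UNIV. e$i)" unfolding YZ Pe(2) r_def
    by (simp add: det_mul orth_det_sq[OF Pe(1)] det_diagm algebra_simps)
  have dC: "det (\<theta> *\<^sub>R X + (1 - \<theta>) *\<^sub>R Y) = r * (\<Prod>i\<in>UNIV. f$i)" unfolding comb r_def
    by (simp add: det_mul det_diagm algebra_simps)
    (metis (no_types, lifting) Pe(1) det_mul mult.commute mult.left_commute mult_1 orth_det_sq)
  have fpos: "f$i > 0" for i
  proof -
    have e: "e$i > 0" using Pe(3) by blast
    have a: "0 \<le> (1 - \<theta>) * e$i" using e th by simp
    have b: "\<theta> = 0 \<Longrightarrow> 0 < (1 - \<theta>) * e$i" using e by simp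
    show ?thesis unfolding f_def using a b th by (cases "\<theta> = 0") auto
  qed
  have fi: "(1 - \<theta>) * ln (e$i) \<le> ln (f$i)" for i
  proof -
    have "(1 - (1 - \<theta>)) * ln 1 + (1 - \<theta>) * ln (e$i) \<le> ln ((1 - (1 - \<theta>)) *\<^sub>R 1 + (1 - \<theta>) *\<^sub>R e$i)"
      by (rule concave_onD[OF ln_concave]) (use th Pe(3) in auto)
    then show ?thesis unfolding f_def by simp
  qed
  have "\<theta> * ln (det X) + (1 - \<theta>) * ln (det Y) = ln r + (1 - \<theta>) * (\<Sum>i\<in>UNIV. ln (e$i))"
  proof -
    have pe: "(\<Prod>i\<in>UNIV. e$i) > 0" using Pe(3) by (simp add: prod_pos)
    have "ln (r * (\<Prod>i\<in>UNIV. e$i)) = ln r + ln (\<Prod>i\<in>UNIV. e$i)" by (rule ln_mult_pos[OF r0 pe])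
    also have "ln (\<Prod>i\<in>UNIV. e$i) = (\<Sum>i\<in>UNIV. ln (e$i))"
      by (rule ln_prod) (use Pe(3) in \<open>auto simp: less_imp_neq[symmetric]\<close>)
    finally show ?thesis unfolding dX dY by (simp add: algebra_simps)
  qed
  also have "\<dots> \<le> ln r + (\<Sum>i\<in>UNIV. ln (f$i))"
    using fi by (simp add: sum_distrib_left sum_mono)
  also have "\<dots> = ln (det (\<theta> *\<^sub>R X + (1 - \<theta>) *\<^sub>R Y))"
  proof -
    have pe: "(\<Prod>i\<in>UNIV. f$i) > 0" using fpos by (simp add: prod_pos)
    have "ln (r * (\<Prod>i\<in>UNIV. f$i)) = ln r + ln (\<Prod>i\<in>UNIV. f$i)" by (rule ln_mult_pos[OF r0 pe])
    also have "ln (\<Prod>i\<in>UNIV. f$i) = (\<Sum>i\<in>UNIV. ln (f$i))"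
      by (rule ln_prod) (use fpos in \<open>auto simp: less_imp_neq[symmetric]\<close>)
    finally show ?thesis unfolding dC by simp
  qed
  finally show ?thesis .
qed

lemma ln_ge_one_minus_inv: "(y::real) > 0 \<Longrightarrow> 1 - 1 / y \<le> ln y"
  using ln_le_minus_one[of "1/y"] by (simp add: ln_div)

lemma xlog_nonneg: "(a::real) > 0 \<Longrightarrow> b > 0 \<Longrightarrow> 0 \<le> a * ln (a / b) - a + b"
proof -
  assume a: "a > 0" and b: "b > 0"
  have "1 - b / a \<le> ln (a / b)" using ln_ge_one_minus_inv[of "a/b"] a b by simp
  then have "a * (1 - b / a) \<le> a * ln (a / b)" using a by (simp add: mult_left_mono)
  then show ?thesis using a by (simp add: algebra_simps)
qed

lemma xlog_conv:
  fixes la lb c \<mu> :: real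
  assumes la: "la > 0" and lb: "lb > 0" and c: "c > 0" and mu: "0 < \<mu>" "\<mu> < 1"
  shows "(\<mu> * la + (1 - \<mu>) * lb) * ln ((\<mu> * la + (1 - \<mu>) * lb) / c)
         \<le> \<mu> * (la * ln (la / c)) + (1 - \<mu>) * (lb * ln (lb / c))"
proof -
  define l where "l = \<mu> * la + (1 - \<mu>) * lb"
  have l: "l > 0" unfolding l_def using la lb mu by (simp add: add_pos_pos)
  have A: "la * (1 - l / la) \<le> la * ln (la / l)"
    using ln_ge_one_minus_inv[of "la / l"] la l by (intro mult_left_mono) auto
  have B: "lb * (1 - l / lb) \<le> lb * ln (lb / l)"
    using ln_ge_one_minus_inv[of "lb / l"] lb l by (intro mult_left_mono) auto
  have "0 = \<mu> * (la * (1 - l / la)) + (1 - \<mu>) * (lb * (1 - l / lb))"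
    using la lb unfolding l_def by (simp add: field_simps)
  also have "\<dots> \<le> \<mu> * (la * ln (la / l)) + (1 - \<mu>) * (lb * ln (lb / l))"
    using add_mono[OF mult_left_mono[OF A] mult_left_mono[OF B]] mu by simp
  finally have *: "0 \<le> \<mu> * (la * ln (la / l)) + (1 - \<mu>) * (lb * ln (lb / l))" .
  have e1: "ln (la / c) = ln (la / l) + ln (l / c)" using la l c by (simp add: ln_div)
  have e2: "ln (lb / c) = ln (lb / l) + ln (l / c)" using lb l c by (simp add: ln_div)
  show ?thesis unfolding l_def[symmetric] e1 e2 using * unfolding l_def
    by (simp add: algebra_simps)
qed

lemma xlnx_lower: "(a::real) > 0 \<Longrightarrow> - 2 * sqrt a \<le> a * ln a"
proof -
  assume a: "a > 0"
  have s: "sqrt a > 0" using a by simp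
  have "1 - 1 / sqrt a \<le> ln (sqrt a)" using ln_ge_one_minus_inv[OF s] .
  then have "2 * a * (1 - 1 / sqrt a) \<le> 2 * a * ln (sqrt a)" using a by (intro mult_left_mono) auto
  also have "2 * a * ln (sqrt a) = a * ln a" using a by (simp add: ln_sqrt)
  also have "2 * a * (1 - 1 / sqrt a) = 2 * a - 2 * sqrt a"
    using a s by (simp add: field_simps)
  finally show ?thesis using a by simp
qed

lemma det_scaleR: "det (c *\<^sub>R (A::real^'n^'n)) = c ^ CARD('n) * det A"
proof -
  have "c *\<^sub>R A = mat c ** A"
    by (simp add: vec_eq_iff matrix_matrix_mult_def mat_def if_distrib[of "\<lambda>x. x * _"] sum.delta cong: if_cong)
  moreover have "det (mat c :: real^'n^'n) = c ^ CARD('n)"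
    by (subst det_diagonal) (auto simp: mat_def)
  ultimately show ?thesis by (simp add: det_mul)
qed

lemma trace_scaleR: "trace (c *\<^sub>R (A::real^'n^'n)) = c * trace A"
  by (simp add: trace_def sum_distrib_left)

definition lt :: "real^'n^'n \<Rightarrow> real^'n^'n \<Rightarrow> real" where
  "lt B S = trace (B ** S) / real CARD('n)"

definition Fv :: "real^'n^'n \<Rightarrow> real \<Rightarrow> real^'n^'n \<Rightarrow> real" where
  "Fv B l2 S = (let l1 = trace (B ** S) / real CARD('n); Sb1 = (1 / l1) *\<^sub>R S
                in l1 * ln (l1 / l2) - l1 + l2 - l1 / 2 * ln (det (B ** Sb1)))"

definition Hv :: "real^'n^'n \<Rightarrow> real^'n^'n \<Rightarrow> real" where
  "Hv B S = lt B S / 2 * (real CARD('n) * ln (lt B S) - ln (det (B ** S)))"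

lemma lt_pos:
  fixes B S :: "real^'n^'n"
  assumes "pd B" "pd S" shows "lt B S > 0"
proof -
  have "0 < trace (B ** S)" using pd_prod_amgm[OF assms] by blast
  then show ?thesis unfolding lt_def by simp
qed

lemma Fv_decomp:
  fixes B S :: "real^'n^'n"
  assumes B: "pd B" and S: "pd S"
  shows "Fv B l2 S = lt B S * ln (lt B S / l2) - lt B S + l2 + Hv B S"
proof -
  define l where "l = lt B S"
  have l: "l > 0" unfolding l_def using lt_pos B S by blast
  have d: "det (B ** S) > 0" using pd_prod_amgm[OF B S] by blast
  have "det (B ** ((1 / l) *\<^sub>R S)) = (1 / l) ^ CARD('n) * det (B ** S)"
    by (simp add: matrix_scalar_ac scalar_matrix_assoc[symmetric] det_scaleR)
  then have e: "ln (det (B ** ((1 / l) *\<^sub>R S))) = ln (det (B ** S)) - real CARD('n) * ln l"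
    using l d by (simp add: ln_mult_pos ln_realpow ln_div)
  show ?thesis unfolding Fv_def Hv_def Let_def lt_def[symmetric] l_def[symmetric] e
    by (simp add: algebra_simps)
qed

lemma Hv_nonneg:
  fixes B S :: "real^'n^'n"
  assumes B: "pd B" and S: "pd S"
  shows "0 \<le> Hv B S"
proof -
  define l where "l = lt B S"
  have l: "l > 0" unfolding l_def using lt_pos B S by blast
  have d: "det (B ** S) > 0" "det (B ** S) \<le> l ^ CARD('n)"
    using pd_prod_amgm[OF B S] unfolding l_def lt_def by auto
  have "ln (det (B ** S)) \<le> ln (l ^ CARD('n))" using d l by simp
  then have "ln (det (B ** S)) \<le> real CARD('n) * ln l" by (simp add: ln_realpow)
  then show ?thesis unfolding Hv_def l_def[symmetric] using l by simp
qed

lemma Fv_nonneg: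
  fixes B S :: "real^'n^'n"
  assumes B: "pd B" and S: "pd S" and l2: "l2 > 0"
  shows "0 \<le> Fv B l2 S"
  unfolding Fv_decomp[OF B S] using xlog_nonneg[OF lt_pos[OF B S] l2] Hv_nonneg[OF B S] by simp

lemma lt_comb:
  fixes B a b :: "real^'n^'n"
  shows "lt B (\<mu> *\<^sub>R a + (1 - \<mu>) *\<^sub>R b) = \<mu> * lt B a + (1 - \<mu>) * lt B b"
  unfolding lt_def
  by (simp add: matrix_add_ldistrib matrix_scalar_ac scalar_matrix_assoc[symmetric] trace_add trace_scaleR
      add_divide_distrib)

lemma ln_det_scale:
  fixes a :: "real^'n^'n"
  assumes "det a > 0" "c > 0"
  shows "ln (det (c *\<^sub>R a)) = ln (det a) - real CARD('n) * ln (1 / c)"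
  using assms by (simp add: det_scaleR ln_mult_pos ln_realpow ln_div)

lemma ln_det_mult:
  fixes B a :: "real^'n^'n"
  assumes "det B > 0" "det a > 0"
  shows "ln (det (B ** a)) = ln (det B) + ln (det a)"
  using assms by (simp add: det_mul ln_mult_pos)

lemma Hv_conv:
  fixes B a b :: "real^'n^'n"
  assumes B: "pd B" and a: "pd a" and b: "pd b" and mu: "0 < \<mu>" "\<mu> < 1"
  shows "Hv B (\<mu> *\<^sub>R a + (1 - \<mu>) *\<^sub>R b) \<le> \<mu> * Hv B a + (1 - \<mu>) * Hv B b"
proof -
  define c where "c = \<mu> *\<^sub>R a + (1 - \<mu>) *\<^sub>R b"
  have c: "pd c" unfolding c_def using pd_comb[OF a pd_psd[OF b]] mu by simp
  define la where "la = lt B a"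
  define lb where "lb = lt B b"
  define l where "l = lt B c"
  have la: "la > 0" and lb: "lb > 0" unfolding la_def lb_def using lt_pos B a b by auto
  have leq: "l = \<mu> * la + (1 - \<mu>) * lb" unfolding l_def la_def lb_def c_def by (rule lt_comb)
  have l: "l > 0" using leq la lb mu by (simp add: add_pos_pos)
  define \<theta> where "\<theta> = \<mu> * la / l"
  have pos: "0 \<le> (1 - \<mu>) * lb" using mu lb by simp
  have mla: "\<mu> * la \<le> l" "0 \<le> \<mu> * la" using leq pos mu la by auto
  have th: "0 \<le> \<theta>" "\<theta> \<le> 1" unfolding \<theta>_def using l mla by (auto simp: divide_le_eq)
  have s1: "\<theta> * (1 / la) = (1 / l) * \<mu>" unfolding \<theta>_def using la l by simp
  have d1: "l - \<mu> * la = (1 - \<mu>) * lb" using leq by simp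
  have d2: "1 - \<theta> = (l - \<mu> * la) / l" unfolding \<theta>_def using l by (simp add: field_simps)
  have s2: "(1 - \<theta>) * (1 / lb) = (1 / l) * (1 - \<mu>)" unfolding d2 d1 using lb l by simp
  have pa': "pd ((1 / la) *\<^sub>R a)" using pd_scale[OF a] la by simp
  have pb': "pd ((1 / lb) *\<^sub>R b)" using pd_scale[OF b] lb by simp
  have cc: "\<theta> *\<^sub>R ((1 / la) *\<^sub>R a) + (1 - \<theta>) *\<^sub>R ((1 / lb) *\<^sub>R b) = (1 / l) *\<^sub>R c"
    unfolding c_def scaleR_scaleR s1 s2 by (simp add: scaleR_add_right)
  have LD: "\<theta> * ln (det ((1 / la) *\<^sub>R a)) + (1 - \<theta>) * ln (det ((1 / lb) *\<^sub>R b)) \<le> ln (det ((1 / l) *\<^sub>R c))"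
    using logdet_concave[OF pa' pb' th] unfolding cc .
  have da: "det a > 0" and db: "det b > 0" and dc: "det c > 0" and dB: "det B > 0"
    using pd_det_pos a b c B by auto
  define N where "N = real CARD('n)"
  define DA where "DA = ln (det a)"
  define DB where "DB = ln (det b)"
  define DC where "DC = ln (det c)"
  define K where "K = ln (det B)"
  have LD2: "\<theta> * (DA - N * ln la) + (1 - \<theta>) * (DB - N * ln lb) \<le> DC - N * ln l"
    using LD la lb l unfolding DA_def DB_def DC_def N_def
    by (simp add: ln_det_scale[OF da] ln_det_scale[OF db] ln_det_scale[OF dc] ln_div)
  have e1: "l / 2 * \<theta> = \<mu> * la / 2" unfolding \<theta>_def using l by simp
  have e2: "l / 2 * (1 - \<theta>) = (1 - \<mu>) * lb / 2" unfolding d2 d1 using l by simp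
  have "\<mu> * la / 2 * (DA - N * ln la) + (1 - \<mu>) * lb / 2 * (DB - N * ln lb)
      = (l / 2 * \<theta>) * (DA - N * ln la) + (l / 2 * (1 - \<theta>)) * (DB - N * ln lb)"
    unfolding e1 e2 ..
  also have "\<dots> = l / 2 * (\<theta> * (DA - N * ln la) + (1 - \<theta>) * (DB - N * ln lb))"
    by (simp add: field_simps)
  also have "\<dots> \<le> l / 2 * (DC - N * ln l)"
    using LD2 l by (simp add: mult_left_mono)
  finally have M: "\<mu> * la / 2 * (DA - N * ln la) + (1 - \<mu>) * lb / 2 * (DB - N * ln lb) \<le> l / 2 * (DC - N * ln l)" .
  have HA: "Hv B a = la / 2 * (N * ln la - (K + DA))"
    unfolding Hv_def la_def[symmetric] N_def K_def DA_def using ln_det_mult[OF dB da] by simp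
  have HB: "Hv B b = lb / 2 * (N * ln lb - (K + DB))"
    unfolding Hv_def lb_def[symmetric] N_def K_def DB_def using ln_det_mult[OF dB db] by simp
  have HC: "Hv B c = l / 2 * (N * ln l - (K + DC))"
    unfolding Hv_def l_def[symmetric] N_def K_def DC_def using ln_det_mult[OF dB dc] by simp
  have KK: "l / 2 - \<mu> * la / 2 - (1 - \<mu>) * lb / 2 = 0" unfolding leq by (simp add: field_simps)
  have id: "(\<mu> * (la / 2 * (N * ln la - (K + DA))) + (1 - \<mu>) * (lb / 2 * (N * ln lb - (K + DB))))
     - l / 2 * (N * ln l - (K + DC))
     = (l / 2 * (DC - N * ln l) - (\<mu> * la / 2 * (DA - N * ln la) + (1 - \<mu>) * lb / 2 * (DB - N * ln lb)))
       + (l / 2 - \<mu> * la / 2 - (1 - \<mu>) * lb / 2) * K"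
    by (simp add: field_simps)
  have "0 \<le> (\<mu> * (la / 2 * (N * ln la - (K + DA))) + (1 - \<mu>) * (lb / 2 * (N * ln lb - (K + DB))))
     - l / 2 * (N * ln l - (K + DC))" unfolding id KK using M by simp
  then show ?thesis unfolding c_def[symmetric] HA HB HC by simp
qed

lemma Fv_conv:
  fixes B a b :: "real^'n^'n"
  assumes B: "pd B" and a: "pd a" and b: "pd b" and mu: "0 < \<mu>" "\<mu> < 1" and l2: "l2 > 0"
  shows "Fv B l2 (\<mu> *\<^sub>R a + (1 - \<mu>) *\<^sub>R b) \<le> \<mu> * Fv B l2 a + (1 - \<mu>) * Fv B l2 b"
proof -
  have c: "pd (\<mu> *\<^sub>R a + (1 - \<mu>) *\<^sub>R b)" using pd_comb[OF a pd_psd[OF b]] mu by simp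
  have la: "lt B a > 0" and lb: "lt B b > 0" using lt_pos B a b by auto
  show ?thesis
    unfolding Fv_decomp[OF B a] Fv_decomp[OF B b] Fv_decomp[OF B c] lt_comb
    using xlog_conv[OF la lb l2 mu] Hv_conv[OF B a b mu] by (simp add: algebra_simps)
qed

lemma Fv_scale:
  fixes B b :: "real^'n^'n"
  assumes B: "pd B" and b: "pd b" and s: "0 < s" "s \<le> 1" and l2: "l2 > 0"
  shows "Fv B l2 (s *\<^sub>R b) \<le> s * Fv B l2 b + (1 - s) * l2"
proof -
  have sb: "pd (s *\<^sub>R b)" using pd_scale[OF b s(1)] .
  define lb where "lb = lt B b"
  have lb: "lb > 0" unfolding lb_def using lt_pos B b by auto
  have lsb: "lt B (s *\<^sub>R b) = s * lb" unfolding lt_def lb_def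
    by (simp add: matrix_scalar_ac scalar_matrix_assoc[symmetric] trace_scaleR)
  have db: "det (B ** b) > 0" using pd_prod_amgm[OF B b] by blast
  have "ln (det (B ** (s *\<^sub>R b))) = ln (det (B ** b)) + real CARD('n) * ln s"
    using db s by (simp add: matrix_scalar_ac scalar_matrix_assoc[symmetric] det_scaleR ln_mult_pos ln_realpow)
  then have H: "Hv B (s *\<^sub>R b) = s * Hv B b"
    unfolding Hv_def lsb lb_def[symmetric] using s lb by (simp add: ln_mult_pos algebra_simps)
  have lns: "ln s \<le> 0" using s by simp
  have L: "s * lb * ln (s * lb / l2) = s * (lb * ln (lb / l2)) + s * lb * ln s"
    using s lb l2 by (simp add: ln_div ln_mult_pos algebra_simps)
  have "s * lb * ln s \<le> 0" using lns s lb by (simp add: mult_nonneg_nonpos)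
  then show ?thesis
    unfolding Fv_decomp[OF B sb] Fv_decomp[OF B b] lsb H lb_def[symmetric] L
    by (simp add: algebra_simps)
qed

lemma tendsto_det:
  fixes M :: "'a \<Rightarrow> real^'n^'n"
  assumes "(M \<longlongrightarrow> A) F"
  shows "((\<lambda>q. det (M q)) \<longlongrightarrow> det A) F"
  unfolding det_def by (intro tendsto_intros assms)

lemma tendsto_mmult:
  fixes M N :: "'a \<Rightarrow> real^'n^'n"
  assumes "(M \<longlongrightarrow> A) F" "(N \<longlongrightarrow> B) F"
  shows "((\<lambda>q. M q ** N q) \<longlongrightarrow> A ** B) F"
  unfolding matrix_matrix_mult_def by (intro tendsto_intros assms)

lemma tendsto_trace:
  fixes M :: "'a \<Rightarrow> real^'n^'n"
  assumes "(M \<longlongrightarrow> A) F"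
  shows "((\<lambda>q. trace (M q)) \<longlongrightarrow> trace A) F"
  unfolding trace_def by (intro tendsto_intros assms)

definition adjf :: "real^'n^'n \<Rightarrow> real^'n^'n" where
  "adjf A = (\<chi> k j. det (\<chi> i j'. if j' = k then axis j 1 $ i else A$i$j') / det A)"

lemma mv_axis: "((M::real^'n^'n) *v axis j 1) $ k = M $ k $ j"
  by (simp add: matrix_vector_mult_def axis_def if_distrib[of "\<lambda>x. _ * x"] cong: if_cong)

lemma minv_adjf:
  fixes A :: "real^'n^'n"
  assumes "det A \<noteq> 0"
  shows "matrix_inv A = adjf A"
proof -
  have inv: "invertible A" using assms invertible_det_nz by blast
  note ip = inv_props[OF inv]
  have "matrix_inv A $ k $ j = adjf A $ k $ j" for k j
  proof -
    have "A *v (matrix_inv A *v axis j 1) = axis j 1"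
      by (simp add: matrix_vector_mul_assoc ip)
    then have "matrix_inv A *v axis j 1 = (\<chi> k. det (\<chi> i j'. if j' = k then axis j 1 $ i else A$i$j') / det A)"
      using cramer[OF assms] by blast
    then have "(matrix_inv A *v axis j 1) $ k = det (\<chi> i j'. if j' = k then axis j 1 $ i else A$i$j') / det A"
      by simp
    then show ?thesis unfolding mv_axis adjf_def by simp
  qed
  then show ?thesis by (simp add: vec_eq_iff)
qed

lemma tendsto_minv:
  fixes M :: "'a \<Rightarrow> real^'n^'n"
  assumes M: "(M \<longlongrightarrow> A) F" and d: "det A \<noteq> 0"
  shows "((\<lambda>q. matrix_inv (M q)) \<longlongrightarrow> matrix_inv A) F"
proof -
  have ev: "\<forall>\<^sub>F q in F. det (M q) \<noteq> 0"
    using tendsto_det[OF M] d by (rule tendsto_imp_eventually_ne)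
  have h: "((\<lambda>q. if j' = k then axis j 1 $ i else M q $ i $ j') \<longlongrightarrow>
         (if j' = k then axis j 1 $ i else A $ i $ j')) F" for j' k j i
    by (cases "j' = k") (auto intro!: tendsto_vec_nth M)
  have "((\<lambda>q. adjf (M q)) \<longlongrightarrow> adjf A) F"
    unfolding adjf_def by (intro tendsto_intros tendsto_det M d h)
  then have "((\<lambda>q. adjf (M q)) \<longlongrightarrow> matrix_inv A) F" using minv_adjf[OF d] by simp
  then show ?thesis
  proof (rule Lim_transform_eventually)
    show "\<forall>\<^sub>F x in F. adjf (M x) = matrix_inv (M x)"
      using ev by (rule eventually_mono) (simp add: minv_adjf)
  qed
qed

lemma pd_nonzero: "pd (S::real^'n^'n) \<Longrightarrow> S \<noteq> 0"
proof
  assume p: "pd S" and z: "S = 0"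
  define v :: "real^'n" where "v = axis undefined 1"
  have "v \<noteq> 0" unfolding v_def by (simp add: axis_eq_0_iff)
  then have "0 < v \<bullet> (S *v v)" using p unfolding pd_def by blast
  moreover have "S *v v = 0" unfolding z by (simp add: vec_eq_iff matrix_vector_mult_def)
  ultimately show False by simp
qed

lemma psd_null:
  fixes S :: "real^'n^'n"
  assumes S: "psd S" and v: "v \<bullet> (S *v v) = 0"
  shows "S *v v = 0"
proof -
  have sym: "transpose S = S" using S unfolding psd_def by blast
  define w where "w = S *v v"
  define K where "K = w \<bullet> (S *v w)"
  have key: "2 * t * (w \<bullet> w) \<le> t^2 * K" for t
  proof -
    have "0 \<le> (v - t *\<^sub>R w) \<bullet> (S *v (v - t *\<^sub>R w))" using S unfolding psd_def by blast
    also have "\<dots> = v \<bullet> (S *v v) - t * (v \<bullet> (S *v w)) - t * (w \<bullet> (S *v v)) + t^2 * (w \<bullet> (S *v w))"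
      by (simp add: matrix_vector_mult_diff_distrib matrix_vector_mult_scaleR inner_diff_left inner_diff_right
          power2_eq_square algebra_simps)
    also have "v \<bullet> (S *v w) = w \<bullet> (S *v v)"
      using sym_dot[OF sym, of v w] by (simp add: inner_commute)
    finally show ?thesis unfolding K_def using v w_def by (simp add: algebra_simps)
  qed
  have "w \<bullet> w = 0"
  proof (rule ccontr)
    assume ne: "w \<bullet> w \<noteq> 0"
    then have pos: "w \<bullet> w > 0" by (simp add: order_le_neq_trans)
    define t where "t = (w \<bullet> w) / (\<bar>K\<bar> + 1)"
    have tpos: "t > 0" unfolding t_def using pos by simp
    have "2 * t * (w \<bullet> w) \<le> t * (t * K)" using key[of t] by (simp add: power2_eq_square mult.assoc)
    then have "2 * (w \<bullet> w) \<le> t * K" using tpos by simp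
    also have "\<dots> \<le> t * \<bar>K\<bar>" using tpos by (simp add: mult_left_mono)
    also have "\<dots> < w \<bullet> w" unfolding t_def using pos
      by (simp add: divide_less_eq field_simps)
    finally show False using pos by simp
  qed
  then show ?thesis unfolding w_def by simp
qed

lemma psd_not_pd_det:
  fixes S :: "real^'n^'n"
  assumes S: "psd S" and np: "\<not> pd S"
  shows "det S = 0"
proof -
  obtain v where v: "v \<noteq> 0" "\<not> 0 < v \<bullet> (S *v v)" using np S unfolding pd_def psd_def by blast
  then have "v \<bullet> (S *v v) = 0" using S unfolding psd_def by (meson linorder_neqE_linordered_idom not_le)
  then have "S *v v = 0" using psd_null[OF S] by blast
  then have "\<not> invertible S" using v inj_matrix_vector_mult
    by (metis injD matrix_vector_mult_0_right)
  then show ?thesis using invertible_det_nz by blast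
qed

lemma ltr_zero: "ltr lam2 Sig2 t x 0 = ereal (lam2 t x)"
  unfolding ltr_def by simp

lemma ltr_pd:
  fixes Sig2 :: "real \<Rightarrow> real^'n \<Rightarrow> real^'n^'n"
  assumes "pd S"
  shows "ltr lam2 Sig2 t x S = ereal (Fv (matrix_inv (Sig2 t x)) (lam2 t x) S)"
  using assms pd_nonzero[OF assms] unfolding ltr_def Fv_def Let_def by simp

lemma ltr_sing:
  assumes "S \<noteq> 0" "\<not> pd S"
  shows "ltr lam2 Sig2 t x S = \<infinity>"
  using assms unfolding ltr_def by simp

lemma psd_cases:
  assumes "psd S"
  obtains "S = 0" | "pd S" | "S \<noteq> 0" "\<not> pd S"
  by blast

lemma ltr_nonneg:
  fixes Sig2 :: "real \<Rightarrow> real^'n \<Rightarrow> real^'n^'n"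
  assumes B: "pd (Sig2 t x)" and l2: "lam2 t x > 0" and S: "psd S"
  shows "0 \<le> ltr lam2 Sig2 t x S"
proof -
  have Bi: "pd (matrix_inv (Sig2 t x))" using pd_inv[OF B] .
  show ?thesis
  proof (cases rule: psd_cases[OF S])
    case 1 then show ?thesis using l2 by (simp add: ltr_zero)
  next
    case 2 then show ?thesis using Fv_nonneg[OF Bi 2 l2] by (simp add: ltr_pd)
  next
    case 3 then show ?thesis by (simp add: ltr_sing)
  qed
qed

lemma ltr_convex:
  fixes Sig2 :: "real \<Rightarrow> real^'n \<Rightarrow> real^'n^'n"
  assumes B: "pd (Sig2 t x)" and l2: "lam2 t x > 0"
  shows "ereal_convex_on {S1. psd S1} (ltr lam2 Sig2 t x)"
  unfolding ereal_convex_on_def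
proof (intro ballI allI impI)
  fix a b :: "real^'n^'n" and \<mu> :: real
  assume a: "a \<in> {S1. psd S1}" and b: "b \<in> {S1. psd S1}" and mu: "0 \<le> \<mu> \<and> \<mu> \<le> 1"
  let ?f = "ltr lam2 Sig2 t x"
  define Bi where "Bi = matrix_inv (Sig2 t x)"
  define L where "L = lam2 t x"
  have Bi: "pd Bi" unfolding Bi_def using pd_inv[OF B] .
  have L: "L > 0" unfolding L_def using l2 .
  have fa: "0 \<le> ?f a" using ltr_nonneg[of Sig2 t x lam2, OF B l2] a by simp
  have fb: "0 \<le> ?f b" using ltr_nonneg[of Sig2 t x lam2, OF B l2] b by simp
  show "?f (\<mu> *\<^sub>R a + (1 - \<mu>) *\<^sub>R b) \<le> ereal \<mu> * ?f a + ereal (1 - \<mu>) * ?f b"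
  proof (cases "\<mu> = 0 \<or> \<mu> = 1")
    case True
    then show ?thesis
    proof
      assume "\<mu> = 0" then show ?thesis by (simp add: zero_ereal_def[symmetric])
    next
      assume "\<mu> = 1" then show ?thesis by (simp add: zero_ereal_def[symmetric] one_ereal_def[symmetric])
    qed
  next
    case False
    then have mu': "0 < \<mu>" "\<mu> < 1" using mu by auto
    have pa: "psd a" and pb: "psd b" using a b by auto
    show ?thesis
    proof (cases rule: psd_cases[OF pa])
      case a0: 1
      show ?thesis
      proof (cases rule: psd_cases[OF pb])
        case 1
        then show ?thesis using a0 mu' by (simp add: ltr_zero times_ereal.simps(1)[symmetric] plus_ereal.simps(1)
              del: times_ereal.simps plus_ereal.simps) (simp add: algebra_simps)
      next
        case 2
        have c: "\<mu> *\<^sub>R a + (1 - \<mu>) *\<^sub>R b = (1 - \<mu>) *\<^sub>R b" using a0 by simp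
        have pc: "pd ((1 - \<mu>) *\<^sub>R b)" using pd_scale[OF 2] mu' by simp
        have "Fv Bi L ((1 - \<mu>) *\<^sub>R b) \<le> (1 - \<mu>) * Fv Bi L b + (1 - (1 - \<mu>)) * L"
          using Fv_scale[OF Bi 2 _ _ L, of "1 - \<mu>"] mu' by simp
        then show ?thesis unfolding c using a0 pc 2
          by (simp add: ltr_pd ltr_zero Bi_def[symmetric] L_def[symmetric] algebra_simps)
      next
        case 3
        then show ?thesis using mu' fa a0 by (simp add: ltr_sing ltr_zero)
      qed
    next
      case ap: 2
      show ?thesis
      proof (cases rule: psd_cases[OF pb])
        case 1
        have c: "\<mu> *\<^sub>R a + (1 - \<mu>) *\<^sub>R b = \<mu> *\<^sub>R a" using 1 by simp
        have pc: "pd (\<mu> *\<^sub>R a)" using pd_scale[OF ap] mu' by simp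
        have "Fv Bi L (\<mu> *\<^sub>R a) \<le> \<mu> * Fv Bi L a + (1 - \<mu>) * L"
          using Fv_scale[OF Bi ap _ _ L, of \<mu>] mu' by simp
        then show ?thesis unfolding c using 1 pc ap
          by (simp add: ltr_pd ltr_zero Bi_def[symmetric] L_def[symmetric] algebra_simps)
      next
        case 2
        have pc: "pd (\<mu> *\<^sub>R a + (1 - \<mu>) *\<^sub>R b)" using pd_comb[OF ap pb] mu' by simp
        have "Fv Bi L (\<mu> *\<^sub>R a + (1 - \<mu>) *\<^sub>R b) \<le> \<mu> * Fv Bi L a + (1 - \<mu>) * Fv Bi L b"
          using Fv_conv[OF Bi ap 2 mu' L] .
        then show ?thesis using pc ap 2
          by (simp add: ltr_pd Bi_def[symmetric] L_def[symmetric])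
      next
        case 3
        then show ?thesis using mu' fa by (simp add: ltr_sing)
      qed
    next
      case 3
      have "ereal \<mu> * ?f a = \<infinity>" using 3 mu' by (simp add: ltr_sing)
      then show ?thesis using fb mu' by simp
    qed
  qed
qed

lemma ltr_lsc:
  fixes lam2 :: "real \<Rightarrow> real^'d \<Rightarrow> real"
    and Sig2 :: "real \<Rightarrow> real^'d \<Rightarrow> real^'d^'d"
  assumes cont_lam2: "continuous_on ({0..1} \<times> UNIV) (\<lambda>(t, x). lam2 t x)"
    and cont_Sig2: "continuous_on ({0..1} \<times> UNIV) (\<lambda>(t, x). Sig2 t x)"
    and pd_Sig2: "\<And>t x. t \<in> {0..1} \<Longrightarrow> pd (Sig2 t x)"
    and lpos: "\<And>t x. t \<in> {0..1} \<Longrightarrow> 0 < lam2 t x"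
  shows "lsc_on {(t, x, S1). t \<in> {0..1} \<and> psd S1} (\<lambda>(t, x, S1). ltr lam2 Sig2 t x S1)"
  unfolding lsc_on_def
proof (intro ballI allI impI)
  define D where "D = ({(t, x, S1). t \<in> {0..1} \<and> psd (S1::real^'d^'d)} :: (real \<times> (real^'d) \<times> (real^'d^'d)) set)"
  define f where "f = (\<lambda>(t, x, S1). ltr lam2 Sig2 t x S1)"
  fix p c
  assume pD: "p \<in> {(t, x, S1). t \<in> {0..1} \<and> psd S1}" and cp: "c < (\<lambda>(t, x, S1). ltr lam2 Sig2 t x S1) p"
  have pD: "p \<in> D" using pD unfolding D_def .
  have cp: "c < f p" using cp unfolding f_def .
  define F where "F = at p within D"
  define L2 where "L2 = (\<lambda>q::real \<times> (real^'d) \<times> (real^'d^'d). lam2 (fst q) (fst (snd q)))"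
  define Sg where "Sg = (\<lambda>q::real \<times> (real^'d) \<times> (real^'d^'d). Sig2 (fst q) (fst (snd q)))"
  define SS where "SS = (\<lambda>q::real \<times> (real^'d) \<times> (real^'d^'d). snd (snd q))"
  define Bq where "Bq = (\<lambda>q. matrix_inv (Sg q))"
  define lq where "lq = (\<lambda>q. trace (Bq q ** SS q) / real CARD('d))"
  have fq: "f q = ltr lam2 Sig2 (fst q) (fst (snd q)) (SS q)" for q
    unfolding f_def SS_def by (simp add: case_prod_beta)
  have qD: "pd (Bq q) \<and> 0 < L2 q \<and> psd (SS q) \<and> fst q \<in> {0..1}" if "q \<in> D" for q
    using that pd_inv[OF pd_Sig2] lpos unfolding D_def Bq_def Sg_def L2_def SS_def by auto
  have fnn: "0 \<le> f q" if "q \<in> D" for q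
    using that ltr_nonneg[of Sig2 "fst q" "fst (snd q)" lam2 "SS q"] pd_Sig2 lpos unfolding fq D_def SS_def
    by auto
  have inD: "\<forall>\<^sub>F q in F. q \<in> D" unfolding F_def by (simp add: eventually_at_filter)
  have img: "(\<lambda>q. (fst q, fst (snd q))) ` D \<subseteq> {0..1} \<times> UNIV" unfolding D_def by auto
  have cL: "continuous_on D L2"
    using continuous_on_compose2[OF cont_lam2 _ img] unfolding L2_def
    by (simp add: continuous_intros case_prod_beta)
  have cS: "continuous_on D Sg"
    using continuous_on_compose2[OF cont_Sig2 _ img] unfolding Sg_def
    by (simp add: continuous_intros case_prod_beta)
  have tL2: "(L2 \<longlongrightarrow> L2 p) F" using cL pD unfolding F_def continuous_on_def by blast
  have tSg: "(Sg \<longlongrightarrow> Sg p) F" using cS pD unfolding F_def continuous_on_def by blast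
  have tSS: "(SS \<longlongrightarrow> SS p) F" unfolding SS_def F_def by (intro tendsto_intros)
  have pp: "pd (Bq p)" "0 < L2 p" "psd (SS p)" using qD[OF pD] by auto
  have "fst p \<in> {0..1}" using qD[OF pD] by blast
  then have "pd (Sg p)" unfolding Sg_def using pd_Sig2 by blast
  then have dSg: "det (Sg p) \<noteq> 0" using pd_det_pos by force
  have tB: "(Bq \<longlongrightarrow> Bq p) F" unfolding Bq_def by (rule tendsto_minv[OF tSg dSg])
  have tl: "(lq \<longlongrightarrow> lq p) F" unfolding lq_def by (intro tendsto_intros tendsto_trace tendsto_mmult tB tSS) simp
  have main: "\<forall>\<^sub>F q in F. ereal r < f q" if rp: "ereal r < f p" for r
  proof (cases rule: psd_cases[OF pp(3)])
    case 1
    define LB where "LB = (\<lambda>q. L2 q - 2 * sqrt (lq q) - lq q * ln (L2 q) - lq q)"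
    have lp0: "lq p = 0" unfolding lq_def 1 by (simp add: trace_def)
    have "(LB \<longlongrightarrow> L2 p - 2 * sqrt (lq p) - lq p * ln (L2 p) - lq p) F"
      unfolding LB_def using pp(2) by (intro tendsto_intros tL2 tl) auto
    then have tLB: "(LB \<longlongrightarrow> L2 p) F" unfolding lp0 by simp
    have fp: "f p = ereal (L2 p)" unfolding fq 1 L2_def by (simp add: ltr_zero)
    have "\<forall>\<^sub>F q in F. r < LB q" using rp fp tLB by (simp add: order_tendstoD(1))
    with inD show ?thesis
    proof (rule eventually_elim2)
      fix q assume q: "q \<in> D" and rq: "r < LB q"
      note qq = qD[OF q]
      show "ereal r < f q"
      proof (cases rule: psd_cases[OF conjunct1[OF conjunct2[OF conjunct2[OF qq]]]])
        case 1
        then have "lq q = 0" unfolding lq_def by (simp add: trace_def)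
        then show ?thesis using rq 1 unfolding fq LB_def L2_def by (simp add: ltr_zero)
      next
        case 2
        have l: "lq q > 0" "lq q = lt (Bq q) (SS q)" using lt_pos[OF conjunct1[OF qq] 2] unfolding lq_def lt_def by auto
        have "LB q \<le> Fv (Bq q) (L2 q) (SS q)"
        proof -
          have "- 2 * sqrt (lq q) \<le> lq q * ln (lq q)" using xlnx_lower l by blast
          moreover have "lq q * ln (lq q / L2 q) = lq q * ln (lq q) - lq q * ln (L2 q)"
            using l qq by (simp add: ln_div algebra_simps)
          moreover have "0 \<le> Hv (Bq q) (SS q)" using Hv_nonneg[OF conjunct1[OF qq] 2] .
          ultimately show ?thesis unfolding Fv_decomp[OF conjunct1[OF qq] 2] LB_def l(2)[symmetric]
            by simp
        qed
        then show ?thesis using rq 2 unfolding fq Bq_def Sg_def L2_def by (simp add: ltr_pd)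
      next
        case 3
        then show ?thesis unfolding fq by (simp add: ltr_sing)
      qed
    qed
  next
    case 2
    define V where "V = (\<lambda>q. Fv (Bq q) (L2 q) (SS q))"
    have fp: "f p = ereal (V p)" unfolding fq V_def Bq_def Sg_def L2_def using 2 by (simp add: ltr_pd)
    have lp: "lq p > 0" using lt_pos[OF pp(1) 2] unfolding lq_def lt_def by simp
    have dp: "det (Bq p ** ((1 / lq p) *\<^sub>R SS p)) > 0"
      using pd_det_pos[OF pd_scale[OF 2, of "1 / lq p"]] pd_det_pos[OF pp(1)] lp
      by (simp add: det_mul)
    have tT: "((\<lambda>q. trace (Bq q ** SS q)) \<longlongrightarrow> trace (Bq p ** SS p)) F"
      by (intro tendsto_trace tendsto_mmult tB tSS)
    have trp: "trace (Bq p ** SS p) \<noteq> 0" using lp unfolding lq_def by auto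
    have dp': "det (Bq p ** (real CARD('d) / trace (Bq p ** SS p)) *\<^sub>R SS p) \<noteq> 0"
      using dp unfolding lq_def by simp
    have tV: "(V \<longlongrightarrow> V p) F"
      unfolding V_def Fv_def Let_def
      using lp pp(2) dp' trp
      by (intro tendsto_intros tT tL2 tendsto_det tendsto_mmult tB tSS) auto
    have ev1: "\<forall>\<^sub>F q in F. r < V q" using rp fp tV by (simp add: order_tendstoD(1))
    have ev2: "\<forall>\<^sub>F q in F. SS q \<noteq> 0"
      using tSS pd_nonzero[OF 2] by (rule tendsto_imp_eventually_ne)
    have "\<forall>\<^sub>F q in F. q \<in> D \<and> SS q \<noteq> 0 \<and> r < V q"
      using eventually_conj[OF inD eventually_conj[OF ev2 ev1]] .
    then show ?thesis
    proof (rule eventually_mono)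
      fix q assume q: "q \<in> D \<and> SS q \<noteq> 0 \<and> r < V q"
      show "ereal r < f q"
      proof (cases "pd (SS q)")
        case True
        then show ?thesis using q unfolding fq V_def Bq_def Sg_def L2_def by (simp add: ltr_pd)
      next
        case False
        then show ?thesis using q unfolding fq by (simp add: ltr_sing)
      qed
    qed
  next
    case 3
    define N where "N = real CARD('d)"
    have N0: "N > 0" unfolding N_def by simp
    have lp: "lq p > 0" using trace_pos_psd[OF pp(1) pp(3) 3(1)] unfolding lq_def by simp
    define m where "m = N * ln (lq p / 2)"
    define \<delta> where "\<delta> = exp (m - 4 * \<bar>r\<bar> / lq p - 1)"
    have d0: "\<delta> > 0" unfolding \<delta>_def by simp
    have detp: "det (Bq p ** SS p) = 0" using psd_not_pd_det[OF pp(3) 3(2)] by (simp add: det_mul)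
    have tD: "((\<lambda>q. det (Bq q ** SS q)) \<longlongrightarrow> 0) F"
      using tendsto_det[OF tendsto_mmult[OF tB tSS]] unfolding detp .
    have e1: "\<forall>\<^sub>F q in F. det (Bq q ** SS q) < \<delta>" using tD d0 by (rule order_tendstoD(2))
    have e2: "\<forall>\<^sub>F q in F. lq p / 2 < lq q" using tl lp by (intro order_tendstoD(1)) auto
    have e3: "\<forall>\<^sub>F q in F. SS q \<noteq> 0"
      using tSS 3(1) by (rule tendsto_imp_eventually_ne)
    have "\<forall>\<^sub>F q in F. q \<in> D \<and> SS q \<noteq> 0 \<and> lq p / 2 < lq q \<and> det (Bq q ** SS q) < \<delta>"
      using eventually_conj[OF inD eventually_conj[OF e3 eventually_conj[OF e2 e1]]] .
    then show ?thesis
    proof (rule eventually_mono)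
      fix q assume q: "q \<in> D \<and> SS q \<noteq> 0 \<and> lq p / 2 < lq q \<and> det (Bq q ** SS q) < \<delta>"
      note qq = qD[OF conjunct1[OF q]]
      show "ereal r < f q"
      proof (cases "pd (SS q)")
        case False
        then show ?thesis using q unfolding fq by (simp add: ltr_sing)
      next
        case True
        have Bp: "pd (Bq q)" using qq by blast
        have l: "lq q = lt (Bq q) (SS q)" unfolding lq_def lt_def by simp
        have dpos: "det (Bq q ** SS q) > 0" using pd_prod_amgm[OF Bp True] by blast
        have lq2: "lq p / 2 < lq q" using q by blast
        have "ln (det (Bq q ** SS q)) < ln \<delta>" using q dpos d0 by simp
        then have lnD: "ln (det (Bq q ** SS q)) < m - 4 * \<bar>r\<bar> / lq p - 1" unfolding \<delta>_def by simp
        have "ln (lq p / 2) \<le> ln (lq q)" using lq2 lp by simp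
        then have "m \<le> N * ln (lq q)" unfolding m_def using N0 by simp
        then have K: "4 * \<bar>r\<bar> / lq p + 1 < N * ln (lq q) - ln (det (Bq q ** SS q))" using lnD by simp
        have "0 \<le> 4 * \<bar>r\<bar> / lq p" using lp by simp
        then have Kpos: "0 < 4 * \<bar>r\<bar> / lq p + 1" by linarith
        have "lq p / 4 * (4 * \<bar>r\<bar> / lq p + 1) < lq q / 2 * (N * ln (lq q) - ln (det (Bq q ** SS q)))"
        proof -
          have a1: "lq p / 4 < lq q / 2" using lq2 lp by simp
          have a2: "0 < lq q / 2" using lq2 lp by simp
          show ?thesis using mult_strict_mono[OF a1 K a2 Kpos[THEN less_imp_le]] .
        qed
        moreover have "lq p / 4 * (4 * \<bar>r\<bar> / lq p + 1) = \<bar>r\<bar> + lq p / 4" using lp by (simp add: field_simps)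
        ultimately have "r < Hv (Bq q) (SS q)" unfolding Hv_def l[symmetric] N_def[symmetric] using lp by simp
        moreover have "0 \<le> lq q * ln (lq q / L2 q) - lq q + L2 q"
          using xlog_nonneg lt_pos[OF Bp True] qq unfolding l by auto
        ultimately have "r < Fv (Bq q) (L2 q) (SS q)" unfolding Fv_decomp[OF Bp True] l by simp
        then show ?thesis using True unfolding fq Bq_def Sg_def L2_def by (simp add: ltr_pd)
      qed
    qed
  qed
  have fin: "\<forall>\<^sub>F q in F. c < f q"
  proof (cases c)
    case (real r)
    then show ?thesis using main cp by simp
  next
    case PInf
    then show ?thesis using cp by simp
  next
    case MInf
    have m1: "ereal (-1) < 0" by simp
    have "ereal (-1) < f p" using order_less_le_trans[OF m1 fnn[OF pD]] .
    then have "\<forall>\<^sub>F q in F. ereal (-1) < f q" by (rule main)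
    then show ?thesis
    proof (rule eventually_mono)
      fix q assume "ereal (-1) < f q"
      then show "c < f q" unfolding MInf by (metis ereal_MInfty_lessI MInfty_eq_minfinity order_less_trans)
    qed
  qed
  then show "\<forall>\<^sub>F q in at p within {(t, x, S1). t \<in> {0..1} \<and> psd S1}. c < (\<lambda>(t, x, S1). ltr lam2 Sig2 t x S1) q"
    unfolding F_def D_def f_def .
qed

theorem mainTheorem10:
  fixes lam2 :: "real \<Rightarrow> real^'d \<Rightarrow> real"
    and Sig2 :: "real \<Rightarrow> real^'d \<Rightarrow> real^'d^'d"
    and bl bu M :: real
  assumes cont_lam2: "continuous_on ({0..1} \<times> UNIV) (\<lambda>(t, x). lam2 t x)"
    and cont_Sig2: "continuous_on ({0..1} \<times> UNIV) (\<lambda>(t, x). Sig2 t x)"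
    and pd_Sig2: "\<And>t x. t \<in> {0..1} \<Longrightarrow> pd (Sig2 t x)"
    and bl_pos: "0 < bl" and bl_le_bu: "bl \<le> bu" and M_pos: "0 < M"
    and lam2_bounds: "\<And>t x. t \<in> {0..1} \<Longrightarrow> bl \<le> lam2 t x \<and> lam2 t x \<le> bu"
    and Sig2_bound: "\<And>t x. t \<in> {0..1} \<Longrightarrow> loewner_le (Sig2 t x) (M *\<^sub>R mat 1)"
  shows "(\<forall>t\<in>{0..1}. \<forall>x. \<forall>S1. psd S1 \<longrightarrow> 0 \<le> ltr lam2 Sig2 t x S1)
       \<and> (\<forall>t\<in>{0..1}. \<forall>x. ereal_convex_on {S1. psd S1} (ltr lam2 Sig2 t x))
       \<and> lsc_on {(t, x, S1). t \<in> {0..1} \<and> psd S1} (\<lambda>(t, x, S1). ltr lam2 Sig2 t x S1)"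
proof -
  have lpos: "\<And>t x. t \<in> {0..1} \<Longrightarrow> 0 < lam2 t x"
    using lam2_bounds bl_pos by (meson less_le_trans)
  show ?thesis
  proof (intro conjI ballI allI impI)
    fix t :: real and x :: "real^'d" and S1 :: "real^'d^'d" assume t: "t \<in> {0..1}" and S: "psd S1"
    show "0 \<le> ltr lam2 Sig2 t x S1" using ltr_nonneg[of Sig2 t x lam2 S1, OF pd_Sig2[OF t] lpos[OF t] S] .
  next
    fix t :: real and x :: "real^'d" assume t: "t \<in> {0..1}"
    show "ereal_convex_on {S1. psd S1} (ltr lam2 Sig2 t x)"
      using ltr_convex[of Sig2 t x lam2, OF pd_Sig2[OF t] lpos[OF t]] .
  next
    show "lsc_on {(t, x, S1). t \<in> {0..1} \<and> psd S1} (\<lambda>(t, x, S1). ltr lam2 Sig2 t x S1)"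
      using ltr_lsc[OF cont_lam2 cont_Sig2 pd_Sig2 lpos] by blast
  qed
qed

end
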